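(* Let $\mathcal{X}=({\bm X},m^{\bm X}_\bullet,\nu^{\bm X})$ and $\mathcal{Y}=({\bm Y},m^{\bm Y}_\bullet,\nu^{\bm Y})$ be finite Markov chains (not necessarily stationary) and let $C:{\bm X}\times{\bm Y}\to\mathbb{R}_+$ be a cost function. Then for every probability distribution $p$ on $\mathbb{N}$, $$d^{p}_{\mathrm{OTM}}(\mathcal{X},\mathcal{Y};C)\;\ge\;\mathbb{E}_{T\sim p}\big(d^{(T)}_{\mathrm{WL}}(\mathcal{X},\mathcal{Y};C)\big)=\sum_{k\in\mathbb{N}}p(k)\,d^{(k)}_{\mathrm{WL}}(\mathcal{X},\mathcal{Y};C).$$
   Context: A finite Markov chain $\mathcal{X}=({\bm X},m^{\bm X}_\bullet,\nu^{\bm X})$ consists of a finite set ${\bm X}$, a transition kernel $m^{\bm X}_\bullet:{\bm X}\to\mathcal{P}({\bm X})$ and an initial distribution $\nu^{\bm X}\in\mathcal{P}({\bm X})$. For $\alpha\in\mathcal{P}({\bm X}),\beta\in\mathcal{P}({\bm Y})$, $\mathcal{C}(\alpha,\beta)$ denotes the set of couplings of $\alpha$ and $\beta$. A Markovian coupling between $\mathcal{X}$ and $\mathcal{Y}$ is a stochastic process $(X_t,Y_t)_{t\in\mathbb{N}}$ with values in ${\bm X}\times{\bm Y}$ which is a (possibly time-inhomogeneous) Markov chain, such that $\mathrm{law}(X_0,Y_0)\in\mathcal{C}(\nu^{\bm X},\nu^{\bm Y})$ and, for every $t\in\mathbb{N}$ and $x\in{\bm X},y\in{\bm Y}$, the conditional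 law of $(X_{t+1},Y_{t+1})$ given $(X_t,Y_t)=(x,y)$ lies in $\mathcal{C}(m^{\bm X}_x,m^{\bm Y}_y)$. For $p\in\mathcal{P}(\mathbb{N})$ and $T\sim p$, the Optimal Transport Markov distance is $d^{p}_{\mathrm{OTM}}(\mathcal{X},\mathcal{Y};C)=\inf\mathbb{E}\,C(X_T,Y_T)$, the infimum over all Markovian couplings $(X_t,Y_t)_{t\in\mathbb{N}}$ independent of $T$. The depth-$k$ WL distance is $d^{(k)}_{\mathrm{WL}}(\mathcal{X},\mathcal{Y};C)=\inf\mathbb{E}\,C(X_k,Y_k)$, the infimum over all Markovian couplings. *)

theory Defs
  imports "HOL-Probability.Probability"
begin

definition couplings :: "'a pmf \<Rightarrow> 'b pmf \<Rightarrow> ('a \<times> 'b) pmf set" where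
  "couplings \<alpha> \<beta> = {\<mu>. map_pmf fst \<mu> = \<alpha> \<and> map_pmf snd \<mu> = \<beta>}"

definition markov_coupling ::
  "'x pmf \<Rightarrow> ('x \<Rightarrow> 'x pmf) \<Rightarrow> 'y pmf \<Rightarrow> ('y \<Rightarrow> 'y pmf)
   \<Rightarrow> ('x \<times> 'y) pmf \<Rightarrow> (nat \<Rightarrow> 'x \<times> 'y \<Rightarrow> ('x \<times> 'y) pmf) \<Rightarrow> bool" where
  "markov_coupling nuX mX nuY mY mu0 K \<longleftrightarrow>
     mu0 \<in> couplings nuX nuY \<and> (\<forall>t x y. K t (x, y) \<in> couplings (mX x) (mY y))"

fun coupling_law :: "('x \<times> 'y) pmf \<Rightarrow> (nat \<Rightarrow> 'x \<times> 'y \<Rightarrow> ('x \<times> 'y) pmf) \<Rightarrow> nat \<Rightarrow> ('x \<times> 'y) pmf" where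
  "coupling_law mu0 K 0 = mu0"
| "coupling_law mu0 K (Suc t) = bind_pmf (coupling_law mu0 K t) (K t)"

definition d_WL ::
  "nat \<Rightarrow> 'x pmf \<Rightarrow> ('x \<Rightarrow> 'x pmf) \<Rightarrow> 'y pmf \<Rightarrow> ('y \<Rightarrow> 'y pmf) \<Rightarrow> ('x \<Rightarrow> 'y \<Rightarrow> real) \<Rightarrow> real" where
  "d_WL k nuX mX nuY mY C =
     (INF c \<in> {(mu0, K). markov_coupling nuX mX nuY mY mu0 K}.
        measure_pmf.expectation (coupling_law (fst c) (snd c) k) (\<lambda>(x, y). C x y))"

text \<open>T ~ p independent of the coupling: E C(X_T,Y_T) = E_{k~p} E C(X_k,Y_k).\<close>
definition d_OTM ::
  "nat pmf \<Rightarrow> 'x pmf \<Rightarrow> ('x \<Rightarrow> 'x pmf) \<Rightarrow> 'y pmf \<Rightarrow> ('y \<Rightarrow> 'y pmf) \<Rightarrow> ('x \<Rightarrow> 'y \<Rightarrow> real) \<Rightarrow> real" where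
  "d_OTM p nuX mX nuY mY C =
     (INF c \<in> {(mu0, K). markov_coupling nuX mX nuY mY mu0 K}.
        measure_pmf.expectation p (\<lambda>k.
          measure_pmf.expectation (coupling_law (fst c) (snd c) k) (\<lambda>(x, y). C x y)))"

end

theory Submission
  imports Defs
begin

lemma exp_le_bound:
  fixes q :: "('x::finite \<times> 'y::finite) pmf" and C :: "'x \<Rightarrow> 'y \<Rightarrow> real"
  assumes "\<And>x y. C x y \<ge> 0"
  shows "0 \<le> measure_pmf.expectation q (\<lambda>(x, y). C x y)
    \<and> measure_pmf.expectation q (\<lambda>(x, y). C x y) \<le> Max (range (\<lambda>(x, y). C x y))"
proof
  show "0 \<le> measure_pmf.expectation q (\<lambda>(x, y). C x y)"
    by (rule Bochner_Integration.integral_nonneg) (auto simp: assms split: prod.splits)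
  have "measure_pmf.expectation q (\<lambda>(x, y). C x y) \<le> measure_pmf.expectation q (\<lambda>_. Max (range (\<lambda>(x, y). C x y)))"
    by (rule Bochner_Integration.integral_mono) (auto simp: integrable_measure_pmf_finite split: prod.splits)
  then show "measure_pmf.expectation q (\<lambda>(x, y). C x y) \<le> Max (range (\<lambda>(x, y). C x y))"
    by simp
qed

theorem proposition6:
  fixes nuX :: "'x::finite pmf" and mX :: "'x \<Rightarrow> 'x pmf"
    and nuY :: "'y::finite pmf" and mY :: "'y \<Rightarrow> 'y pmf"
    and C :: "'x \<Rightarrow> 'y \<Rightarrow> real" and p :: "nat pmf"
  assumes "\<And>x y. C x y \<ge> 0"
  shows "d_OTM p nuX mX nuY mY C \<ge> measure_pmf.expectation p (\<lambda>T. d_WL T nuX mX nuY mY C)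
       \<and> measure_pmf.expectation p (\<lambda>T. d_WL T nuX mX nuY mY C)
           = (\<Sum>\<^sub>\<infinity>k. pmf p k * d_WL k nuX mX nuY mY C)"
proof -
  define S where "S = {(mu0, K). markov_coupling nuX mX nuY mY mu0 K}"
  define B where "B = Max (range (\<lambda>(x, y). C x y))"
  define f where "f = (\<lambda>c k. measure_pmf.expectation (coupling_law (fst c) (snd c) k) (\<lambda>(x, y). C x y))"
  have fb: "0 \<le> f c k \<and> f c k \<le> B" for c k
    unfolding f_def B_def by (rule exp_le_bound[OF assms])
  have Sne: "(pair_pmf nuX nuY, \<lambda>t (x, y). pair_pmf (mX x) (mY y)) \<in> S"
    unfolding S_def markov_coupling_def couplings_def
    by (auto simp: map_fst_pair_pmf map_snd_pair_pmf)
  have dw: "d_WL k nuX mX nuY mY C = (INF c\<in>S. f c k)" for k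
    unfolding d_WL_def S_def f_def ..
  have dwle: "d_WL k nuX mX nuY mY C \<le> f c k" if "c \<in> S" for c k
    unfolding dw using that fb by (intro cINF_lower) (auto intro: bdd_belowI[of _ 0])
  have dwb: "0 \<le> d_WL k nuX mX nuY mY C \<and> d_WL k nuX mX nuY mY C \<le> B" for k
  proof
    show "0 \<le> d_WL k nuX mX nuY mY C" unfolding dw using Sne fb
      by (intro cINF_greatest) auto
    show "d_WL k nuX mX nuY mY C \<le> B" using dwle[OF Sne] fb order_trans by blast
  qed
  have intd: "integrable (measure_pmf p) (\<lambda>T. d_WL T nuX mX nuY mY C)"
    by (rule measure_pmf.integrable_const_bound[where B=B]) (use dwb in auto)
  have intf: "integrable (measure_pmf p) (f c)" for c
    by (rule measure_pmf.integrable_const_bound[where B=B]) (use fb in auto)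
  have part1: "measure_pmf.expectation p (\<lambda>T. d_WL T nuX mX nuY mY C) \<le> d_OTM p nuX mX nuY mY C"
  proof -
    have "d_OTM p nuX mX nuY mY C = (INF c\<in>S. measure_pmf.expectation p (f c))"
      unfolding d_OTM_def S_def f_def ..
    also have "measure_pmf.expectation p (\<lambda>T. d_WL T nuX mX nuY mY C) \<le> \<dots>"
      using Sne by (intro cINF_greatest Bochner_Integration.integral_mono intd intf dwle) auto
    finally show ?thesis .
  qed
  have part2: "measure_pmf.expectation p (\<lambda>T. d_WL T nuX mX nuY mY C)
           = (\<Sum>\<^sub>\<infinity>k. pmf p k * d_WL k nuX mX nuY mY C)"
    unfolding pmf_expectation_eq_infsetsum
    by (rule infsetsum_infsum, rule abs_summable_on_comparison_test'[where g="\<lambda>k. pmf p k * B"])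
       (use dwb in \<open>auto simp: abs_mult intro!: mult_left_mono\<close>)
  show ?thesis using part1 part2 by simp
qed

end
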